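(* Let $d\ge3$ and let $V\ge0$ be locally integrable on $\mathbb R^d$ with $\Delta^{-1}V(x)=-c_d\int_{\mathbb R^d}|x-y|^{2-d}V(y)\,dy\in L^\infty(\mathbb R^d)$. Then for $0<\gamma\le2$, $r>0$ and $y\in\mathbb R^d$, $$\int_{\mathbb R^d}V(z)\Big(1+\frac{|z-y|}{r}\Big)^{-d+\gamma}dz\le c_d^{-1}r^{d-2}\|\Delta^{-1}V\|_{L^\infty}.$$
   Context: $c_d>0$ is the constant for which $\int_0^\infty(4\pi t)^{-d/2}e^{-|x|^2/4t}\,dt=c_d|x|^{2-d}$. *)

theory Defs
  imports "HOL-Analysis.Analysis" "HOL-Probability.Essential_Supremum"
begin

text \<open>The constant c_d: by definition the integral of the heat kernel over time
  equals c_d |x|^(2-d); evaluated at |x| = 1 this gives the value below.\<close>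
definition cd :: "nat \<Rightarrow> real" where
  "cd d = (LBINT t:{0<..}. (4 * pi * t) powr (- real d / 2) * exp (- 1 / (4 * t)))"

text \<open>The (nonnegative) Newton potential  c_d \<integral> |x-y|^(2-d) V(y) dy, i.e. |\<Delta>^{-1} V(x)|
  for V \<ge> 0, as an extended nonnegative real.\<close>
definition newton_pot :: "('a::euclidean_space \<Rightarrow> real) \<Rightarrow> 'a \<Rightarrow> ennreal" where
  "newton_pot V x = ennreal (cd DIM('a)) *
     (\<integral>\<^sup>+ y. ennreal (norm (x - y) powr (2 - real DIM('a)) * V y) \<partial>lebesgue)"

definition Linf_newton :: "('a::euclidean_space \<Rightarrow> real) \<Rightarrow> ennreal" where
  "Linf_newton V = esssup lebesgue (newton_pot V)"

end

theory Submission imports Defs "HOL-Real_Asymp.Real_Asymp" begin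
lemma f_bound:
  fixes p t :: real
  assumes p: "p \<ge> 3/2" and t: "t > 0"
  shows "(4*pi*t) powr (-p) * exp (-1/(4*t)) \<le> ((p/pi) powr p * 2 powr (3/2) + 1) * (1+t) powr (-3/2)"
proof (cases "t \<ge> 1")
  case True
  have "(4*pi*t) powr (-p) * exp (-1/(4*t)) \<le> (4*pi*t) powr (-p)"
    apply (rule mult_left_le) using t by auto
  also have "\<dots> \<le> (4*pi*t) powr (-3/2)"
  proof (rule powr_mono)
    show "- p \<le> - 3 / 2" using p by simp
    have "4*pi \<ge> 1" using pi_gt3 by simp
    then show "1 \<le> 4 * pi * t" using True by (metis mult_mono' one_le_mult_iff zero_le_one mult_1_left order_trans less_eq_real_def) 
  qed
  also have "\<dots> \<le> (1+t) powr (-3/2)"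
  proof (rule powr_mono2')
    have "2 * t \<le> (4*pi) * t" using True pi_gt3 by (intro mult_right_mono) auto
    then show "1 + t \<le> 4 * pi * t" using True by linarith
  qed (use True in auto)
  also have "\<dots> \<le> ((p/pi) powr p * 2 powr (3/2) + 1) * (1+t) powr (-3/2)"
  proof -
    have "0 \<le> (p/pi) powr p * 2 powr (3/2)" by simp
    then show ?thesis by (simp add: mult_le_cancel_right1)
  qed
  finally show ?thesis .
next
  case False
  define u where "u = 1/(4*t)"
  have u: "u > 0" using t by (simp add: u_def)
  have pp: "p > 0" using p by simp
  have e1: "4*pi*t = pi/u" using t by (simp add: u_def)
  have "(4*pi*t) powr (-p) = (u/pi) powr p"
    unfolding e1 using u by (simp add: powr_minus_divide powr_divide)
  moreover have "exp (-1/(4*t)) = 1 / exp (u/p) powr p"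
    using pp by (simp add: u_def powr_def exp_minus field_simps flip: exp_of_nat_mult)
  moreover have "(u/p) powr p \<le> exp (u/p) powr p"
    apply (rule powr_mono2) using u pp apply auto
    by (smt (verit) exp_ge_add_one_self)
  ultimately have "(4*pi*t) powr (-p) * exp (-1/(4*t)) \<le> (u/pi) powr p / (u/p) powr p"
  proof -
    assume a1: "(4*pi*t) powr (-p) = (u/pi) powr p" and a2: "exp (-1/(4*t)) = 1 / exp (u/p) powr p"
      and a3: "(u/p) powr p \<le> exp (u/p) powr p"
    have "(4*pi*t) powr (-p) * exp (-1/(4*t)) = (u/pi) powr p / exp (u/p) powr p" unfolding a1 a2 by simp
    also have "\<dots> \<le> (u/pi) powr p / (u/p) powr p"
      apply (rule divide_left_mono[OF a3]) using u pp by auto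
    finally show ?thesis .
  qed
  also have "\<dots> = (p/pi) powr p"
  proof -
    have "(u/pi) powr p / (u/p) powr p = ((u/pi) / (u/p)) powr p"
      using u pp pi_gt_zero by (simp add: powr_divide)
    also have "(u/pi) / (u/p) = p/pi" using u by (simp add: field_simps)
    finally show ?thesis .
  qed
  also have "\<dots> \<le> (p/pi) powr p * 2 powr (3/2) * (1+t) powr (-3/2)"
  proof -
    have "2 powr (-3/2) \<le> (1+t) powr (-3/2)"
      apply (rule powr_mono2') using False t by auto
    then have h1: "2 powr (3/2) * 2 powr (-3/2) \<le> 2 powr (3/2) * (1+t) powr (-3/2)"
      by (rule mult_left_mono) simp
    have h2: "2 powr (3/2) * 2 powr (-3/2) = (1::real)"
      by (simp flip: powr_add)
    have "1 \<le> 2 powr (3/2) * (1+t) powr (-3/2)" using h1 unfolding h2 .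
    then have "(p/pi) powr p * 1 \<le> (p/pi) powr p * (2 powr (3/2) * (1+t) powr (-3/2))"
      by (rule mult_left_mono) simp
    then show ?thesis by (simp add: mult.assoc)
  qed
  also have "\<dots> \<le> ((p/pi) powr p * 2 powr (3/2) + 1) * (1+t) powr (-3/2)"
    by (simp add: distrib_right)
  finally show ?thesis .
qed
lemma g_int: "(\<integral>\<^sup>+x. ennreal ((1+x) powr (-3/2)) * indicator {0 ..} x \<partial>lborel) = 2"
proof -
  have "(\<integral>\<^sup>+x. ennreal ((1+x) powr (-3/2)) * indicator {0 ..} x \<partial>lborel) = ennreal (0 - (-2 * (1+0) powr (-1/2)))"
  proof (rule nn_integral_FTC_atLeast)
    show "(\<lambda>x::real. (1+x) powr (-3/2::real)) \<in> borel_measurable borel" by measurable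
    show "DERIV (\<lambda>x::real. -2 * (1+x) powr (-1/2)) x :> (1+x) powr (-3/2)" if "0 \<le> x" for x
    proof -
      have "DERIV (\<lambda>x::real. -2 * (1+x) powr (-1/2)) x :> -2 * ((-1/2) * (1+x) powr (-1/2 - 1) * 1)"
        using that by (auto intro!: derivative_eq_intros)
      then show ?thesis by simp
    qed
    show "0 \<le> (1+x) powr (-3/2)" for x :: real by simp
    show "((\<lambda>x::real. -2 * (1+x) powr (-1/2)) \<longlongrightarrow> 0) at_top"
      by real_asymp
  qed
  then show ?thesis by simp
qed

lemma cd_pos:
  assumes d: "d \<ge> 3"
  shows "cd d > 0"
proof -
  define p where "p = real d / 2"
  have p: "p \<ge> 3/2" using d by (simp add: p_def)
  define f where "f t = (4 * pi * t) powr (- real d / 2) * exp (- 1 / (4 * t))" for t :: real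
  define h where "h t = indicator {0<..} t * f t" for t :: real
  define B where "B = (p/pi) powr p * 2 powr (3/2) + 1"
  have B: "B > 0" unfolding B_def by (smt (verit) powr_ge_zero mult_nonneg_nonneg)
  have cd_eq: "cd d = integral\<^sup>L lborel h"
    unfolding cd_def set_lebesgue_integral_def h_def f_def by simp
  have hmeas: "h \<in> borel_measurable lborel"
    unfolding h_def f_def by measurable
  have fpos: "f t > 0" if "t > 0" for t using that pi_gt_zero by (simp add: f_def)
  have hb: "ennreal (norm (h t)) \<le> ennreal B * (ennreal ((1+t) powr (-3/2)) * indicator {0 ..} t)" for t
  proof (cases "t > 0")
    case True
    have "f t \<le> B * (1+t) powr (-3/2)"
      using f_bound[OF p True] by (simp add: f_def B_def p_def)
    then have "ennreal (f t) \<le> ennreal (B * (1+t) powr (-3/2))" by (rule ennreal_leI)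
    then show ?thesis using True fpos[OF True] B
      by (simp add: h_def ennreal_mult indicator_def)
  next
    case False
    then show ?thesis by (simp add: h_def)
  qed
  have "(\<integral>\<^sup>+t. ennreal (norm (h t)) \<partial>lborel) \<le> (\<integral>\<^sup>+t. ennreal B * (ennreal ((1+t) powr (-3/2)) * indicator {0 ..} t) \<partial>lborel)"
    by (rule nn_integral_mono) (rule hb)
  also have "\<dots> = ennreal B * 2"
    using g_int by (subst nn_integral_cmult) simp_all
  also have "\<dots> < \<infinity>" by (simp add: ennreal_mult_less_top)
  finally have hint: "integrable lborel h"
    using hmeas by (simp add: integrable_iff_bounded)
  have hnn: "AE t in lborel. 0 \<le> h t"
    using fpos by (auto simp: h_def indicator_def less_imp_le)
  have ge: "integral\<^sup>L lborel h \<ge> 0" by (rule integral_nonneg_AE[OF hnn])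
  have "integral\<^sup>L lborel h \<noteq> 0"
  proof
    assume "integral\<^sup>L lborel h = 0"
    then have "AE t in lborel. h t = 0"
      using integral_nonneg_eq_0_iff_AE[OF hint hnn] by simp
    then have "AE t in lborel. t \<notin> {0<..1::real}"
      by eventually_elim (use fpos in \<open>force simp: h_def\<close>)
    then have "{0<..1::real} \<in> null_sets lborel"
      by (subst AE_iff_null_sets) auto
    then have "emeasure lborel {0<..1::real} = 0" by (simp add: null_sets_def)
    then show False by simp
  qed
  with ge cd_eq show ?thesis by simp
qed

lemma pw_bound:
  fixes x y z :: "'a::euclidean_space" and V :: "'a \<Rightarrow> real"
  assumes n: "n \<ge> 3" and Vz: "V z \<ge> 0" and g: "0 < \<gamma>" "\<gamma> \<le> 2" and r: "r > 0"
    and xy: "norm (x - y) < r" and zx: "z \<noteq> x"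
  shows "V z * (1 + norm (z - y) / r) powr (\<gamma> - real n) \<le> r powr (real n - 2) * (norm (x - z) powr (2 - real n) * V z)"
proof -
  define s where "s = norm (z - y)"
  have s: "s \<ge> 0" by (simp add: s_def)
  have b1: "1 \<le> 1 + s / r" using s r by simp
  have "(1 + s/r) powr (\<gamma> - real n) \<le> (1 + s/r) powr (2 - real n)"
    by (rule powr_mono) (use g b1 in auto)
  also have "(1 + s/r) = (r + s) / r" using r by (simp add: field_simps)
  also have "((r + s) / r) powr (2 - real n) = (r+s) powr (2 - real n) * r powr (real n - 2)"
  proof -
    have "((r + s) / r) powr (2 - real n) = (r+s) powr (2 - real n) / r powr (2 - real n)"
      using r s by (simp add: powr_divide)
    moreover have "r powr (real n - 2) = 1 / r powr (2 - real n)"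
      using powr_minus_divide[of r "2 - real n"] by simp
    ultimately show ?thesis by simp
  qed
  also have "(r+s) powr (2 - real n) \<le> norm (x - z) powr (2 - real n)"
  proof (rule powr_mono2')
    show "2 - real n \<le> 0" using n by simp
    show "0 < norm (x - z)" using zx by simp
    have "norm (x - z) \<le> norm (x - y) + norm (y - z)" using norm_triangle_ineq[of "x-y" "y-z"] by simp
    then show "norm (x - z) \<le> r + s" using xy by (simp add: s_def norm_minus_commute)
  qed
  finally have f1: "((r + s) / r) powr (\<gamma> - real n) \<le> norm (x - z) powr (2 - real n) * r powr (real n - 2)"
    by (simp add: mult_right_mono)
  have "(1 + s/r) = (r + s) / r" using r by (simp add: field_simps)
  with f1 have "(1 + s/r) powr (\<gamma> - real n) \<le> norm (x - z) powr (2 - real n) * r powr (real n - 2)"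
    by simp
  then have "V z * (1 + s/r) powr (\<gamma> - real n) \<le> V z * (norm (x - z) powr (2 - real n) * r powr (real n - 2))"
    by (rule mult_left_mono) (rule Vz)
  then show ?thesis by (simp add: s_def mult_ac)
qed

theorem lemma4p1:
  fixes V :: "'a::euclidean_space \<Rightarrow> real"
    and \<gamma> r :: real and y :: 'a
  assumes dim: "DIM('a) \<ge> 3"
    and Vnonneg: "\<And>x. V x \<ge> 0"
    and Vmeas: "V \<in> borel_measurable lebesgue"
    and Vloc: "\<And>K. compact K \<Longrightarrow> set_integrable lebesgue K V"
    and Linf: "Linf_newton V < \<infinity>"
    and \<gamma>: "0 < \<gamma>" "\<gamma> \<le> 2"
    and r: "r > 0"
  shows "(\<integral>\<^sup>+ z. ennreal (V z * (1 + norm (z - y) / r) powr (\<gamma> - real DIM('a))) \<partial>lebesgue)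
           \<le> ennreal (r powr (real DIM('a) - 2) / cd DIM('a)) * Linf_newton V"
proof -
  define n where "n = DIM('a)"
  have n: "n \<ge> 3" using dim by (simp add: n_def)
  have c: "cd n > 0" using cd_pos[OF n] .
  have AEL: "AE x in lebesgue. newton_pot V x \<le> Linf_newton V"
    unfolding Linf_newton_def by (rule esssup_AE)
  obtain x where xy: "norm (x - y) < r" and Nx: "newton_pot V x \<le> Linf_newton V"
  proof -
    have "\<exists>x\<in>ball y r. newton_pot V x \<le> Linf_newton V"
    proof (rule ccontr)
      assume nt: "\<not> ?thesis"
      from AEL have "AE x in lebesgue. x \<notin> ball y r"
        by eventually_elim (use nt in auto)
      then have "ball y r \<in> null_sets lebesgue"
        by (subst AE_iff_null_sets) auto
      then have "measure lebesgue (ball y r) = 0" by (simp add: measure_eq_0_null_sets)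
      moreover have "measure lebesgue (ball y r) = measure lborel (ball y r)" by simp
      ultimately show False using content_ball_pos[OF r, of y] by simp
    qed
    then show ?thesis using that by (auto simp: dist_norm norm_minus_commute)
  qed
  define I where "I = (\<integral>\<^sup>+ z. ennreal (norm (x - z) powr (2 - real n) * V z) \<partial>lebesgue)"
  have Nx_eq: "newton_pot V x = ennreal (cd n) * I"
    unfolding newton_pot_def I_def n_def ..
  have AEz: "AE z in lebesgue. z \<noteq> x"
    by (rule AE_completion) (rule AE_lborel_singleton)
  have "(\<integral>\<^sup>+ z. ennreal (V z * (1 + norm (z - y) / r) powr (\<gamma> - real n)) \<partial>lebesgue)
      \<le> (\<integral>\<^sup>+ z. ennreal (r powr (real n - 2)) * ennreal (norm (x - z) powr (2 - real n) * V z) \<partial>lebesgue)"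
  proof (rule nn_integral_mono_AE)
    show "AE z in lebesgue. ennreal (V z * (1 + norm (z - y) / r) powr (\<gamma> - real n))
        \<le> ennreal (r powr (real n - 2)) * ennreal (norm (x - z) powr (2 - real n) * V z)"
      using AEz
    proof eventually_elim
      case (elim z)
      have "ennreal (V z * (1 + norm (z - y) / r) powr (\<gamma> - real n))
          \<le> ennreal (r powr (real n - 2) * (norm (x - z) powr (2 - real n) * V z))"
        by (rule ennreal_leI, rule pw_bound[OF n Vnonneg \<gamma> r xy elim])
      then show ?case by (simp add: ennreal_mult Vnonneg)
    qed
  qed
  also have "\<dots> = ennreal (r powr (real n - 2)) * I"
  proof -
    have "(\<lambda>z. norm (x - z) powr (2 - real n)) \<in> borel_measurable lborel" by measurable
    then have m1: "(\<lambda>z. norm (x - z) powr (2 - real n)) \<in> borel_measurable lebesgue"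
      by (rule measurable_completion)
    have "(\<lambda>z. ennreal (norm (x - z) powr (2 - real n) * V z)) \<in> borel_measurable lebesgue"
      using m1 Vmeas by measurable
    then show ?thesis unfolding I_def by (rule nn_integral_cmult)
  qed
  also have "\<dots> = ennreal (r powr (real n - 2) / cd n) * (ennreal (cd n) * I)"
  proof -
    have "ennreal (r powr (real n - 2)) = ennreal (r powr (real n - 2) / cd n) * ennreal (cd n)"
      using c by (simp add: ennreal_mult[symmetric])
    then show ?thesis by (simp add: mult.assoc)
  qed
  also have "\<dots> \<le> ennreal (r powr (real n - 2) / cd n) * Linf_newton V"
    using Nx unfolding Nx_eq by (rule mult_left_mono) simp
  finally show ?thesis unfolding n_def .
qed
end
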